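(* Let $d$ be a degree sequence and $M(d)$ its difference matrix. (i) If two entries in a single row, or in a single column, of $M(d)$ are both nonzero, then these two entries and all entries lying between them in that row (resp. column) are equal. (ii) There are no indices $i<i'$ and $j<j'$ such that the $2\times 2$ submatrix of $M(d)$ on rows $i,i'$ and columns $j,j'$ has the form $\begin{bmatrix} a & b\\ 0 & c\end{bmatrix}$ with $a\neq 0$ and $c\neq 0$ (here $b$ is arbitrary).
   Context: Degree sequences $d=(d_1,\dots,d_n)$ (of finite simple graphs) are listed in nonincreasing order. The corrected Ferrers diagram $F(d)$ is the $n\times n$ matrix whose diagonal entries are $0$ and in which, for each $i$, the first $d_i$ off-diagonal entries of row $i$ (reading left to right, skipping the diagonal position) are $1$ and all other entries are $0$. The difference matrix is $M(d)=F(d)^T-F(d)$; its diagonal entries are $0$. *)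

theory Defs
  imports Main
begin

text \<open>Vertices and matrix indices are 0-based: {0..<n}, where n = length d.\<close>

definition degree_sequence :: "nat list \<Rightarrow> bool" where
  "degree_sequence d \<longleftrightarrow>
     sorted (rev d) \<and>
     (\<exists>E :: nat \<Rightarrow> nat \<Rightarrow> bool.
        (\<forall>i j. E i j \<longrightarrow> E j i) \<and> (\<forall>i. \<not> E i i) \<and>
        (\<forall>i<length d. card {j. j < length d \<and> E i j} = d ! i))"

text \<open>Corrected Ferrers diagram: diagonal entries 0; in row i the first d_i off-diagonal
  entries are 1. Column j (0-based) of row i is the (j+1)-th off-diagonal entry if j < i
  and the j-th one if j > i.\<close>
definition ferrers :: "nat list \<Rightarrow> nat \<Rightarrow> nat \<Rightarrow> int" where
  "ferrers d i j = (if i \<noteq> j \<and> (if j < i then j + 1 else j) \<le> d ! i then 1 else 0)"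

definition diffmat :: "nat list \<Rightarrow> nat \<Rightarrow> nat \<Rightarrow> int" where
  "diffmat d i j = ferrers d j i - ferrers d i j"

end

theory Submission imports Defs begin
definition "Pos D i k \<longleftrightarrow> (k<i \<and> i \<le> D k \<and> D i \<le> k) \<or> (i<k \<and> i<D k \<and> D i<(k::nat))"
definition "Neg D i k \<longleftrightarrow> (k<i \<and> D k < i \<and> k < D i) \<or> (i<k \<and> D k \<le> i \<and> k \<le> (D i::nat))"
lemma dm: "diffmat d i k = (if Pos ((!) d) i k then 1 else if Neg ((!) d) i k then -1 else 0)"
  unfolding diffmat_def ferrers_def Pos_def Neg_def by auto
lemma B: fixes D :: "nat \<Rightarrow> nat"
  assumes "(j \<le> k \<longrightarrow> D k \<le> D j) \<and> (k \<le> j \<longrightarrow> D j \<le> D k)"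
  "(i \<le> j \<longrightarrow> D j \<le> D i) \<and> (j \<le> i \<longrightarrow> D i \<le> D j)"
  "(i' \<le> j \<longrightarrow> D j \<le> D i') \<and> (j \<le> i' \<longrightarrow> D i' \<le> D j)"
  "D k \<le> D i" "D i' \<le> D k" "i \<le> k" "k \<le> i'" "i < i'"
  "Pos D i j \<or> Neg D i j" "Pos D i' j \<or> Neg D i' j"
  shows "(Pos D k j \<longleftrightarrow> Pos D i j) \<and> (Neg D k j \<longleftrightarrow> Neg D i j)"
  using assms unfolding Pos_def Neg_def by (cases "j < i"; cases "j < k"; cases "j<i'"; cases "j=k"; auto)
lemma C: fixes D :: "nat \<Rightarrow> nat"
  assumes "(i \<le> j \<longrightarrow> D j \<le> D i) \<and> (j \<le> i \<longrightarrow> D i \<le> D j)"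
  "(i \<le> j' \<longrightarrow> D j' \<le> D i) \<and> (j' \<le> i \<longrightarrow> D i \<le> D j')"
  "(i' \<le> j \<longrightarrow> D j \<le> D i') \<and> (j \<le> i' \<longrightarrow> D i' \<le> D j)"
  "(i' \<le> j' \<longrightarrow> D j' \<le> D i') \<and> (j' \<le> i' \<longrightarrow> D i' \<le> D j')"
  "D i' \<le> D i" "D j' \<le> D j" "i < i'" "j < j'"
  "Pos D i j \<or> Neg D i j" "\<not> Pos D i' j" "\<not> Neg D i' j" "Pos D i' j' \<or> Neg D i' j'"
  shows False
  using assms unfolding Pos_def Neg_def by (cases "i < j"; cases "i < j'"; cases "i'<j"; cases "i'<j'"; auto)
lemma A: fixes D :: "nat \<Rightarrow> nat"
  assumes "(i \<le> k \<longrightarrow> D k \<le> D i) \<and> (k \<le> i \<longrightarrow> D i \<le> D k)"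
  "(i \<le> j \<longrightarrow> D j \<le> D i) \<and> (j \<le> i \<longrightarrow> D i \<le> D j)"
  "(i \<le> j' \<longrightarrow> D j' \<le> D i) \<and> (j' \<le> i \<longrightarrow> D i \<le> D j')"
  "D k \<le> D j" "D j' \<le> D k" "j \<le> k" "k \<le> j'" "j < j'"
  "Pos D i j \<or> Neg D i j" "Pos D i j' \<or> Neg D i j'"
  shows "(Pos D i k \<longleftrightarrow> Pos D i j) \<and> (Neg D i k \<longleftrightarrow> Neg D i j)"
  using assms unfolding Pos_def Neg_def by (cases "i < j"; cases "i < k"; cases "i<j'"; cases "i=k"; auto)

lemma monoD:
  assumes "degree_sequence d" "a < length d" "b < length d"
  shows "(a \<le> b \<longrightarrow> d!b \<le> d!a) \<and> (b \<le> a \<longrightarrow> d!a \<le> d!b)"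
  using assms sorted_rev_nth_mono unfolding degree_sequence_def by blast

lemma nz: "diffmat d i k \<noteq> 0 \<longleftrightarrow> Pos ((!) d) i k \<or> Neg ((!) d) i k"
  by (simp add: dm)

lemma partA:
  assumes "degree_sequence d" "i < length d" "j < j'" "j' < length d"
    "diffmat d i j \<noteq> 0" "diffmat d i j' \<noteq> 0" "j \<le> k" "k \<le> j'"
  shows "diffmat d i k = diffmat d i j"
proof -
  have k: "k < length d" using assms by simp
  have j: "j < length d" using assms by simp
  have a: "d ! k \<le> d ! j" using monoD[OF assms(1) j k] assms(7) by blast
  have b: "d ! j' \<le> d ! k" using monoD[OF assms(1) k assms(4)] assms(8) by blast
  have "(Pos ((!) d) i k \<longleftrightarrow> Pos ((!) d) i j) \<and> (Neg ((!) d) i k \<longleftrightarrow> Neg ((!) d) i j)"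
    by (rule A[of i k "(!) d" j j', OF monoD[OF assms(1) assms(2) k] monoD[OF assms(1) assms(2) j]
      monoD[OF assms(1) assms(2) assms(4)] a b assms(7) assms(8) assms(3)
      assms(5)[unfolded nz] assms(6)[unfolded nz]])
  then show ?thesis by (simp add: dm)
qed

lemma partB:
  assumes "degree_sequence d" "j < length d" "i < i'" "i' < length d"
    "diffmat d i j \<noteq> 0" "diffmat d i' j \<noteq> 0" "i \<le> k" "k \<le> i'"
  shows "diffmat d k j = diffmat d i j"
proof -
  have k: "k < length d" using assms by simp
  have i: "i < length d" using assms by simp
  have a: "d ! k \<le> d ! i" using monoD[OF assms(1) i k] assms(7) by blast
  have b: "d ! i' \<le> d ! k" using monoD[OF assms(1) k assms(4)] assms(8) by blast
  have "(Pos ((!) d) k j \<longleftrightarrow> Pos ((!) d) i j) \<and> (Neg ((!) d) k j \<longleftrightarrow> Neg ((!) d) i j)"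
    by (rule B[of j k "(!) d" i i', OF monoD[OF assms(1) assms(2) k] monoD[OF assms(1) i assms(2)]
      monoD[OF assms(1) assms(4) assms(2)] a b assms(7) assms(8) assms(3)
      assms(5)[unfolded nz] assms(6)[unfolded nz]])
  then show ?thesis by (simp add: dm)
qed

lemma partC:
  assumes "degree_sequence d" "i < i'" "i' < length d" "j < j'" "j' < length d"
    "diffmat d i j \<noteq> 0" "diffmat d i' j = 0" "diffmat d i' j' \<noteq> 0"
  shows False
proof -
  have i: "i < length d" and j: "j < length d" using assms by simp_all
  have a: "d ! i' \<le> d ! i" using monoD[OF assms(1) i assms(3)] assms(2) by simp
  have b: "d ! j' \<le> d ! j" using monoD[OF assms(1) j assms(5)] assms(4) by simp
  have n1: "\<not> Pos ((!) d) i' j" "\<not> Neg ((!) d) i' j" using assms(7) nz by blast+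
  show False
    by (rule C[of i j "(!) d" j' i', OF monoD[OF assms(1) i j] monoD[OF assms(1) i assms(5)]
    monoD[OF assms(1) assms(3) j] monoD[OF assms(1) assms(3) assms(5)] a b assms(2) assms(4)
    assms(6)[unfolded nz] n1 assms(8)[unfolded nz]])
qed

theorem lemma8:
  fixes d :: "nat list"
  assumes "degree_sequence d"
  shows "(\<forall>i j j'. i < length d \<and> j < j' \<and> j' < length d \<and>
            diffmat d i j \<noteq> 0 \<and> diffmat d i j' \<noteq> 0 \<longrightarrow>
            (\<forall>k. j \<le> k \<and> k \<le> j' \<longrightarrow> diffmat d i k = diffmat d i j))
       \<and> (\<forall>j i i'. j < length d \<and> i < i' \<and> i' < length d \<and>
            diffmat d i j \<noteq> 0 \<and> diffmat d i' j \<noteq> 0 \<longrightarrow>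
            (\<forall>k. i \<le> k \<and> k \<le> i' \<longrightarrow> diffmat d k j = diffmat d i j))
       \<and> \<not> (\<exists>i i' j j'. i < i' \<and> i' < length d \<and> j < j' \<and> j' < length d \<and>
            diffmat d i j \<noteq> 0 \<and> diffmat d i' j = 0 \<and> diffmat d i' j' \<noteq> 0)"
proof (intro conjI allI impI)
  fix i j j' k
  assume "i < length d \<and> j < j' \<and> j' < length d \<and> diffmat d i j \<noteq> 0 \<and> diffmat d i j' \<noteq> 0"
    "j \<le> k \<and> k \<le> j'"
  then show "diffmat d i k = diffmat d i j" using partA[OF assms, of i j j' k] by blast
next
  fix j i i' k
  assume "j < length d \<and> i < i' \<and> i' < length d \<and> diffmat d i j \<noteq> 0 \<and> diffmat d i' j \<noteq> 0"
    "i \<le> k \<and> k \<le> i'"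
  then show "diffmat d k j = diffmat d i j" using partB[OF assms, of j i i' k] by blast
next
  show "\<not> (\<exists>i i' j j'. i < i' \<and> i' < length d \<and> j < j' \<and> j' < length d \<and>
            diffmat d i j \<noteq> 0 \<and> diffmat d i' j = 0 \<and> diffmat d i' j' \<noteq> 0)"
    using partC[OF assms] by blast
qed

end
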